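(* Let $X$ be a Tychonoff space. The following are equivalent: (1) $C_k(X)$ is strictly H-bounded; (2) $C_k(X)$ is H-bounded; (3) $C_k(X)$ is strictly M-bounded; (4) $C_k(X)$ is M-bounded; (5) $X$ is pseudocompact and every compact subset of $X$ is finite.
   Context: $C(X)$ is the set of continuous real-valued functions on $X$, a topological group under pointwise addition with identity the zero function. $C_k(X)$ is $C(X)$ with the compact-open topology (basic neighborhoods of $f$: $\{g:|g(x)-f(x)|<\varepsilon\ \forall x\in K\}$, $K$ compact, $\varepsilon>0$). For a topological group $G$ with identity $e$: $G$ is M-bounded if for every sequence $(U_n)$ of neighborhoods of $e$ there are finite $A_n\subset G$ with $G=\bigcup_n A_nU_n$; H-bounded if for every such sequence there are finite $A_n$ with each $x\in G$ in all but finitely many $A_nU_n$. In the M-game, in round $n$ ONE chooses a neighborhood $U_n$ of $e$ and TWO a finite $A_n\subset G$; TWO wins if $G=\bigcup_nA_nU_n$; $G$ is strictly M-bounded if TWO has a winning strategy. Strictly H-bounded: same game, TWO wins if each $x\in G$ lies in all but finitely many $A_nU_n$, and TWO has a winning strategy. *)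

theory Defs
  imports "HOL-Analysis.Analysis"
begin

definition tychonoff_space :: "'a topology \<Rightarrow> bool" where
  "tychonoff_space X \<longleftrightarrow> completely_regular_space X \<and> Hausdorff_space X"

text \<open>C(X): continuous real-valued functions on X, represented canonically
  (extensionally, value 0 outside the carrier of X).\<close>
definition Cfun :: "'a topology \<Rightarrow> ('a \<Rightarrow> real) set" where
  "Cfun X = {f. continuous_map X euclideanreal f \<and> (\<forall>x. x \<notin> topspace X \<longrightarrow> f x = 0)}"

text \<open>Neighbourhoods of the zero function in C_k(X) (compact-open topology):
  subsets of C(X) containing a basic set {g. |g x| < eps on K}, K compact.\<close>
definition nhd0_k :: "'a topology \<Rightarrow> ('a \<Rightarrow> real) set \<Rightarrow> bool" where
  "nhd0_k X U \<longleftrightarrow> U \<subseteq> Cfun X \<and>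
     (\<exists>K \<epsilon>. compactin X K \<and> \<epsilon> > 0 \<and> {g \<in> Cfun X. \<forall>x\<in>K. \<bar>g x\<bar> < \<epsilon>} \<subseteq> U)"

definition gset_add :: "('a \<Rightarrow> real) set \<Rightarrow> ('a \<Rightarrow> real) set \<Rightarrow> ('a \<Rightarrow> real) set" where
  "gset_add A U = {(\<lambda>x. a x + u x) | a u. a \<in> A \<and> u \<in> U}"

definition M_bounded_Ck :: "'a topology \<Rightarrow> bool" where
  "M_bounded_Ck X \<longleftrightarrow>
    (\<forall>U :: nat \<Rightarrow> ('a \<Rightarrow> real) set. (\<forall>n. nhd0_k X (U n)) \<longrightarrow>
      (\<exists>A :: nat \<Rightarrow> ('a \<Rightarrow> real) set. (\<forall>n. finite (A n) \<and> A n \<subseteq> Cfun X) \<and>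
         Cfun X = (\<Union>n. gset_add (A n) (U n))))"

definition H_bounded_Ck :: "'a topology \<Rightarrow> bool" where
  "H_bounded_Ck X \<longleftrightarrow>
    (\<forall>U :: nat \<Rightarrow> ('a \<Rightarrow> real) set. (\<forall>n. nhd0_k X (U n)) \<longrightarrow>
      (\<exists>A :: nat \<Rightarrow> ('a \<Rightarrow> real) set. (\<forall>n. finite (A n) \<and> A n \<subseteq> Cfun X) \<and>
         (\<forall>f \<in> Cfun X. \<forall>\<^sub>F n in sequentially. f \<in> gset_add (A n) (U n))))"

text \<open>Strategies for TWO: a strategy maps the list of ONE's moves so far
  (U_0, ..., U_n) to TWO's answer A_n.  (TWO's own earlier moves are determined
  by the strategy, so this loses no generality.)\<close>
definition strictly_M_bounded_Ck :: "'a topology \<Rightarrow> bool" where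
  "strictly_M_bounded_Ck X \<longleftrightarrow>
    (\<exists>\<sigma> :: ('a \<Rightarrow> real) set list \<Rightarrow> ('a \<Rightarrow> real) set.
      \<forall>U :: nat \<Rightarrow> ('a \<Rightarrow> real) set. (\<forall>n. nhd0_k X (U n)) \<longrightarrow>
        (\<forall>n. finite (\<sigma> (map U [0..<Suc n])) \<and> \<sigma> (map U [0..<Suc n]) \<subseteq> Cfun X) \<and>
        Cfun X = (\<Union>n. gset_add (\<sigma> (map U [0..<Suc n])) (U n)))"

definition strictly_H_bounded_Ck :: "'a topology \<Rightarrow> bool" where
  "strictly_H_bounded_Ck X \<longleftrightarrow>
    (\<exists>\<sigma> :: ('a \<Rightarrow> real) set list \<Rightarrow> ('a \<Rightarrow> real) set.
      \<forall>U :: nat \<Rightarrow> ('a \<Rightarrow> real) set. (\<forall>n. nhd0_k X (U n)) \<longrightarrow>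
        (\<forall>n. finite (\<sigma> (map U [0..<Suc n])) \<and> \<sigma> (map U [0..<Suc n]) \<subseteq> Cfun X) \<and>
        (\<forall>f \<in> Cfun X. \<forall>\<^sub>F n in sequentially. f \<in> gset_add (\<sigma> (map U [0..<Suc n])) (U n)))"

definition pseudocompact :: "'a topology \<Rightarrow> bool" where
  "pseudocompact X \<longleftrightarrow>
    (\<forall>f. continuous_map X euclideanreal f \<longrightarrow> (\<exists>B. \<forall>x\<in>topspace X. \<bar>f x\<bar> \<le> B))"

end

theory Submission
  imports Defs "HOL-Library.Nat_Bijection"
begin


lemma cont_eps:
  assumes "\<And>x e. x \<in> topspace X \<Longrightarrow> e > 0 \<Longrightarrow> \<exists>U. openin X U \<and> x \<in> U \<and> (\<forall>y\<in>U. \<bar>f y - f x\<bar> < e)"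
  shows "continuous_map X euclideanreal f"
  unfolding continuous_map_atin limitin_atin_self
proof (intro ballI conjI impI allI)
  fix a V assume a: "a \<in> topspace X" and V: "openin euclideanreal V \<and> f a \<in> V"
  then obtain e where e: "e > 0" "\<And>y. \<bar>y - f a\<bar> < e \<Longrightarrow> y \<in> V"
    by (metis open_openin open_real dist_real_def)
  obtain U where "openin X U" "a \<in> U" "\<forall>y\<in>U. \<bar>f y - f a\<bar> < e" using assms[OF a e(1)] by blast
  then show "\<exists>U. openin X U \<and> a \<in> U \<and> f ` U \<subseteq> V" using e by blast
qed auto

lemma Cfun_add: "f \<in> Cfun X \<Longrightarrow> g \<in> Cfun X \<Longrightarrow> (\<lambda>x. f x + g x) \<in> Cfun X"
  by (auto simp: Cfun_def intro: continuous_map_add)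
lemma Cfun_diff: "f \<in> Cfun X \<Longrightarrow> g \<in> Cfun X \<Longrightarrow> (\<lambda>x. f x - g x) \<in> Cfun X"
  by (auto simp: Cfun_def intro: continuous_map_diff)
lemma Cfun_cmul: "f \<in> Cfun X \<Longrightarrow> (\<lambda>x. c * f x) \<in> Cfun X"
  by (auto simp: Cfun_def intro: continuous_map_real_mult_left)
lemma Cfun_sum: "finite I \<Longrightarrow> (\<And>i. i \<in> I \<Longrightarrow> f i \<in> Cfun X) \<Longrightarrow> (\<lambda>x. \<Sum>i\<in>I. f i x) \<in> Cfun X"
  by (auto simp: Cfun_def intro!: continuous_map_sum)

lemma gset_add_sub: "A \<subseteq> Cfun X \<Longrightarrow> U \<subseteq> Cfun X \<Longrightarrow> gset_add A U \<subseteq> Cfun X"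
  by (auto simp: gset_add_def intro!: Cfun_add)

lemma interp:
  assumes "tychonoff_space X" "finite K" "K \<subseteq> topspace X" "x \<in> K"
  shows "\<exists>e\<in>Cfun X. e x = 1 \<and> (\<forall>y\<in>K-{x}. e y = 0)"
proof -
  have H: "Hausdorff_space X" and C: "completely_regular_space X"
    using assms(1) by (auto simp: tychonoff_space_def)
  have "closedin X (K - {x})" using closedin_Hausdorff_finite[OF H, of "K - {x}"] assms by auto
  then obtain f where f: "continuous_map X (top_of_set {0..1}) (f::'a\<Rightarrow>real)" "f x = 0" "f ` (K-{x}) \<subseteq> {1}"
  proof -
    have "x \<in> topspace X - (K - {x})" using assms by auto
    then show ?thesis using C \<open>closedin X (K - {x})\<close> that unfolding completely_regular_space_def by blast
  qed
  define e where "e = (\<lambda>y. if y \<in> topspace X then 1 - f y else 0)"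
  have "continuous_map X euclideanreal (\<lambda>y. 1 - f y)"
    using f(1) by (auto simp: continuous_map_in_subtopology intro!: continuous_map_diff)
  then have "continuous_map X euclideanreal e"
    by (rule continuous_map_eq) (auto simp: e_def)
  then have "e \<in> Cfun X" by (auto simp: Cfun_def e_def)
  moreover have "e x = 1" using assms f by (auto simp: e_def)
  moreover have "\<forall>y\<in>K-{x}. e y = 0" using assms f by (auto simp: e_def)
  ultimately show ?thesis by blast
qed

lemma five_sH:
  assumes T: "tychonoff_space X" and P: "pseudocompact X" and F: "\<forall>K. compactin X K \<longrightarrow> finite K"
  shows "strictly_H_bounded_Ck X"
proof -
  define KK where "KK U = (SOME K. \<exists>\<epsilon>. compactin X K \<and> \<epsilon> > 0 \<and> {g\<in>Cfun X. \<forall>x\<in>K. \<bar>g x\<bar> < \<epsilon>} \<subseteq> U)" for U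
  define EE where "EE U = (SOME \<epsilon>. compactin X (KK U) \<and> \<epsilon> > 0 \<and> {g\<in>Cfun X. \<forall>x\<in>KK U. \<bar>g x\<bar> < \<epsilon>} \<subseteq> U)" for U
  have KE: "compactin X (KK U) \<and> EE U > 0 \<and> {g\<in>Cfun X. \<forall>x\<in>KK U. \<bar>g x\<bar> < EE U} \<subseteq> U"
    if "nhd0_k X U" for U
  proof -
    have "\<exists>K \<epsilon>. compactin X K \<and> \<epsilon> > 0 \<and> {g\<in>Cfun X. \<forall>x\<in>K. \<bar>g x\<bar> < \<epsilon>} \<subseteq> U"
      using that by (simp add: nhd0_k_def)
    then have "\<exists>\<epsilon>. compactin X (KK U) \<and> \<epsilon> > 0 \<and> {g\<in>Cfun X. \<forall>x\<in>KK U. \<bar>g x\<bar> < \<epsilon>} \<subseteq> U"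
      unfolding KK_def by (rule someI_ex)
    then show ?thesis unfolding EE_def by (rule someI_ex)
  qed
  define ee where "ee K x = (SOME e. e\<in>Cfun X \<and> e x = 1 \<and> (\<forall>y\<in>K-{x}. e y = 0))" for K x
  have ee: "ee K x \<in> Cfun X \<and> ee K x x = 1 \<and> (\<forall>y\<in>K-{x}. ee K x y = 0)"
    if "finite K" "K \<subseteq> topspace X" "x \<in> K" for K x
  proof -
    have "\<exists>e. e\<in>Cfun X \<and> e x = 1 \<and> (\<forall>y\<in>K-{x}. e y = 0)" using interp[OF T that] by blast
    from someI_ex[OF this] show ?thesis unfolding ee_def .
  qed
  define J where "J n U = \<lceil>real n / EE U\<rceil> + 1" for n U
  define G where "G n U = (\<lambda>j. real_of_int j * EE U) ` {-J n U..J n U}" for n U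
  define A where "A n U = (\<lambda>c y. \<Sum>x\<in>KK U. c x * ee (KK U) x y) ` (KK U \<rightarrow>\<^sub>E G n U)" for n U
  define \<sigma> where "\<sigma> l = A (length l - 1) (last l)" for l
  show ?thesis unfolding strictly_H_bounded_Ck_def
  proof (intro exI allI impI, rule conjI)
    fix U :: "nat \<Rightarrow> ('a \<Rightarrow> real) set" assume U: "\<forall>n. nhd0_k X (U n)"
    have \<sigma>U: "\<sigma> (map U [0..<Suc n]) = A n (U n)" for n by (simp add: \<sigma>_def last_map)
    have KU: "compactin X (KK (U n))" "finite (KK (U n))" "KK (U n) \<subseteq> topspace X" for n
      using KE[of "U n"] U F compactin_subset_topspace by blast+
    show "\<forall>n. finite (\<sigma> (map U [0..<Suc n])) \<and> \<sigma> (map U [0..<Suc n]) \<subseteq> Cfun X"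
    proof
      fix n
      have "finite (A n (U n))" unfolding A_def G_def using KU
        by (intro finite_imageI finite_PiE) auto
      moreover have "A n (U n) \<subseteq> Cfun X" unfolding A_def
        using KU ee by (auto intro!: Cfun_sum Cfun_cmul)
      ultimately show "finite (\<sigma> (map U [0..<Suc n])) \<and> \<sigma> (map U [0..<Suc n]) \<subseteq> Cfun X"
        unfolding \<sigma>U by blast
    qed
    show "\<forall>f\<in>Cfun X. \<forall>\<^sub>F n in sequentially. f \<in> gset_add (\<sigma> (map U [0..<Suc n])) (U n)"
    proof
      fix f assume f: "f \<in> Cfun X"
      then obtain B where B: "\<And>x. x \<in> topspace X \<Longrightarrow> \<bar>f x\<bar> \<le> B"
        using P f unfolding pseudocompact_def Cfun_def by blast
      show "\<forall>\<^sub>F n in sequentially. f \<in> gset_add (\<sigma> (map U [0..<Suc n])) (U n)"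
        unfolding eventually_sequentially
      proof (intro exI allI impI)
        fix n assume n: "nat \<lceil>B\<rceil> \<le> n"
        define K where "K = KK (U n)"
        define \<epsilon> where "\<epsilon> = EE (U n)"
        have Kf: "finite K" "K \<subseteq> topspace X" using KU by (auto simp: K_def)
        have ep: "\<epsilon> > 0" and sub: "{g\<in>Cfun X. \<forall>x\<in>K. \<bar>g x\<bar> < \<epsilon>} \<subseteq> U n"
          using KE[of "U n"] U by (auto simp: K_def \<epsilon>_def)
        have Bn: "B \<le> real n" using n by linarith
        define c where "c = restrict (\<lambda>x. real_of_int \<lfloor>f x / \<epsilon>\<rfloor> * \<epsilon>) K"
        have "c \<in> K \<rightarrow>\<^sub>E G n (U n)"
        proof
          fix x assume x: "x \<in> K"
          have fx: "\<bar>f x\<bar> \<le> real n" using B[of x] x Kf Bn by auto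
          have "f x \<le> real n" "- real n \<le> f x" using fx by auto
          then have "f x / \<epsilon> \<le> real n / \<epsilon>" "- (real n / \<epsilon>) \<le> f x / \<epsilon>" using ep by (simp_all add: field_simps)
          then have "\<lfloor>f x / \<epsilon>\<rfloor> \<in> {-J n (U n)..J n (U n)}"
            unfolding J_def \<epsilon>_def[symmetric]
            by (auto simp: le_ceiling_iff floor_le_iff) linarith+
          then show "c x \<in> G n (U n)" using x by (auto simp: c_def G_def \<epsilon>_def)
        qed (auto simp: c_def)
        define a where "a = (\<lambda>y. \<Sum>x\<in>K. c x * ee K x y)"
        have aA: "a \<in> A n (U n)" unfolding A_def a_def K_def[symmetric]
          using \<open>c \<in> K \<rightarrow>\<^sub>E G n (U n)\<close> by blast
        have aC: "a \<in> Cfun X" unfolding a_def using Kf ee by (auto intro!: Cfun_sum Cfun_cmul)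
        have aK: "a y = c y" if y: "y \<in> K" for y
        proof -
          have "a y = c y * ee K y y + (\<Sum>x\<in>K-{y}. c x * ee K x y)"
            unfolding a_def using Kf y by (simp add: sum.remove)
          also have "(\<Sum>x\<in>K-{y}. c x * ee K x y) = 0"
            using ee[OF Kf] y by (intro sum.neutral) auto
          finally show ?thesis using ee[OF Kf y] by simp
        qed
        define u where "u = (\<lambda>y. f y - a y)"
        have uC: "u \<in> Cfun X" unfolding u_def using f aC by (rule Cfun_diff)
        have "\<bar>u y\<bar> < \<epsilon>" if y: "y \<in> K" for y
        proof -
          have "u y = f y - real_of_int \<lfloor>f y / \<epsilon>\<rfloor> * \<epsilon>" using aK[OF y] y by (simp add: u_def c_def)
          have fl1: "real_of_int \<lfloor>f y / \<epsilon>\<rfloor> \<le> f y / \<epsilon>" and fl2: "f y / \<epsilon> < real_of_int \<lfloor>f y / \<epsilon>\<rfloor> + 1"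
            by linarith+
          have "real_of_int \<lfloor>f y / \<epsilon>\<rfloor> * \<epsilon> \<le> f y / \<epsilon> * \<epsilon>"
            using mult_right_mono[OF fl1, of \<epsilon>] ep by linarith
          moreover have "f y / \<epsilon> * \<epsilon> < (real_of_int \<lfloor>f y / \<epsilon>\<rfloor> + 1) * \<epsilon>"
            using mult_strict_right_mono[OF fl2 ep] .
          moreover have "f y / \<epsilon> * \<epsilon> = f y" using ep by simp
          ultimately have "real_of_int \<lfloor>f y / \<epsilon>\<rfloor> * \<epsilon> \<le> f y" "f y < (real_of_int \<lfloor>f y / \<epsilon>\<rfloor> + 1) * \<epsilon>"
            by linarith+
          then show ?thesis using \<open>u y = _\<close> by (auto simp: algebra_simps)
        qed
        then have uU: "u \<in> U n" using sub uC by blast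
        have "f = (\<lambda>x. a x + u x)" by (simp add: u_def)
        then show "f \<in> gset_add (\<sigma> (map U [0..<Suc n])) (U n)"
          unfolding gset_add_def \<sigma>U using aA uU by blast
      qed
    qed
  qed
qed



lemma bump:
  assumes "tychonoff_space X" "openin X V" "x \<in> V"
  shows "\<exists>\<phi>. continuous_map X euclideanreal \<phi> \<and> \<phi> x = 1 \<and> (\<forall>y. y \<notin> V \<longrightarrow> \<phi> y = 0) \<and> (\<forall>y. \<bar>\<phi> y\<bar> \<le> 1)"
proof -
  have C: "completely_regular_space X" using assms(1) by (auto simp: tychonoff_space_def)
  have cl: "closedin X (topspace X - V)" using assms(2) by auto
  have xin: "x \<in> topspace X - (topspace X - V)" using assms openin_subset by auto
  obtain f where f: "continuous_map X (top_of_set {0..1}) (f::'a\<Rightarrow>real)" "f x = 0" "f ` (topspace X - V) \<subseteq> {1}"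
    using C cl xin unfolding completely_regular_space_def by blast
  define \<phi> where "\<phi> = (\<lambda>y. if y \<in> topspace X then 1 - f y else 0)"
  have f01: "y \<in> topspace X \<Longrightarrow> f y \<in> {0..1}" for y
    using f(1) by (auto simp: continuous_map_def)
  have "continuous_map X euclideanreal (\<lambda>y. 1 - f y)"
    using f(1) by (auto simp: continuous_map_in_subtopology intro!: continuous_map_diff)
  then have "continuous_map X euclideanreal \<phi>"
    by (rule continuous_map_eq) (auto simp: \<phi>_def)
  moreover have "\<phi> x = 1" using xin f by (auto simp: \<phi>_def)
  moreover have "\<forall>y. y \<notin> V \<longrightarrow> \<phi> y = 0" using f by (auto simp: \<phi>_def)
  moreover have "\<forall>y. \<bar>\<phi> y\<bar> \<le> 1" using f01 by (auto simp: \<phi>_def)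
  ultimately show ?thesis by blast
qed

lemma glue:
  fixes V :: "nat \<Rightarrow> 'a set" and \<phi> :: "nat \<Rightarrow> 'a \<Rightarrow> real" and s :: "nat \<Rightarrow> real"
  assumes Vo: "\<And>k. openin X (V k)" and Vd: "\<And>j k. j \<noteq> k \<Longrightarrow> V j \<inter> V k = {}"
    and \<phi>c: "\<And>k. continuous_map X euclideanreal (\<phi> k)" and \<phi>0: "\<And>k x. x \<notin> V k \<Longrightarrow> \<phi> k x = 0"
    and loc: "\<And>x \<delta>. x \<in> topspace X \<Longrightarrow> \<delta> > 0 \<Longrightarrow> \<exists>Wa F. openin X Wa \<and> x \<in> Wa \<and> finite F \<and> (\<forall>k. k \<notin> F \<longrightarrow> (\<forall>y\<in>Wa. \<bar>s k * \<phi> k y\<bar> < \<delta>))"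
  defines "f \<equiv> \<lambda>x. s (SOME k. x \<in> V k) * \<phi> (SOME k. x \<in> V k) x"
  shows "f \<in> Cfun X" and "\<And>k x. x \<in> V k \<Longrightarrow> f x = s k * \<phi> k x"
proof -
  have fV: "f x = s k * \<phi> k x" if "x \<in> V k" for k x
  proof -
    have "x \<in> V (SOME k. x \<in> V k)" using that by (rule someI)
    then have "(SOME k. x \<in> V k) = k" using Vd that by blast
    then show ?thesis by (simp add: f_def)
  qed
  then show "\<And>k x. x \<in> V k \<Longrightarrow> f x = s k * \<phi> k x" .
  have f0: "f x = 0" if "\<forall>k. x \<notin> V k" for x
    using that \<phi>0 by (simp add: f_def)
  have gsum: "(\<Sum>k\<in>F. s k * \<phi> k y) = (if j \<in> F then s j * \<phi> j y else 0)" if "y \<in> V j" "finite F" for F j y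
  proof -
    have "(\<Sum>k\<in>F. s k * \<phi> k y) = (\<Sum>k\<in>F. if k = j then s j * \<phi> j y else 0)"
    proof (rule sum.cong)
      fix k assume "k \<in> F"
      show "s k * \<phi> k y = (if k = j then s j * \<phi> j y else 0)"
      proof (cases "k = j")
        case False
        then have "y \<notin> V k" using Vd[of j k] that(1) by blast
        then show ?thesis using False \<phi>0 by simp
      qed simp
    qed simp
    then show ?thesis using that by (simp add: sum.delta')
  qed
  have gsum0: "(\<Sum>k\<in>F. s k * \<phi> k y) = 0" if "\<forall>k. y \<notin> V k" for F y
    using that \<phi>0 by (intro sum.neutral) auto
  have "continuous_map X euclideanreal f"
  proof (rule cont_eps)
    fix x e assume x: "x \<in> topspace X" and e: "(e::real) > 0"
    obtain Wa F where Wa: "openin X Wa" "x \<in> Wa" "finite F" "\<forall>k. k \<notin> F \<longrightarrow> (\<forall>y\<in>Wa. \<bar>s k * \<phi> k y\<bar> < e/3)"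
      using loc[OF x, of "e/3"] e by auto
    define g where "g = (\<lambda>y. \<Sum>k\<in>F. s k * \<phi> k y)"
    have gc: "continuous_map X euclideanreal g" unfolding g_def
      using Wa(3) \<phi>c by (intro continuous_map_sum continuous_map_real_mult_left) auto
    have close: "\<bar>f y - g y\<bar> < e/3" if "y \<in> Wa" for y
    proof (cases "\<exists>j. y \<in> V j")
      case True
      then obtain j where j: "y \<in> V j" by blast
      show ?thesis using fV[OF j] gsum[OF j Wa(3)] Wa(4) that e by (auto simp: g_def)
    next
      case False
      then show ?thesis using f0 gsum0 e by (auto simp: g_def)
    qed
    define Wb where "Wb = {y \<in> topspace X. g y \<in> ball (g x) (e/3)}"
    have "openin X Wb" unfolding Wb_def
      using gc by (intro openin_continuous_map_preimage) auto
    moreover have "x \<in> Wb" using x e by (auto simp: Wb_def)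
    moreover have "\<forall>y\<in>Wa \<inter> Wb. \<bar>f y - f x\<bar> < e"
    proof
      fix y assume y: "y \<in> Wa \<inter> Wb"
      then have "\<bar>g y - g x\<bar> < e/3" by (auto simp: Wb_def dist_real_def abs_minus_commute)
      moreover have "\<bar>f y - g y\<bar> < e/3" "\<bar>f x - g x\<bar> < e/3" using close y Wa(2) by auto
      ultimately show "\<bar>f y - f x\<bar> < e" by linarith
    qed
    ultimately show "\<exists>U. openin X U \<and> x \<in> U \<and> (\<forall>y\<in>U. \<bar>f y - f x\<bar> < e)"
      using Wa by (intro exI[of _ "Wa \<inter> Wb"]) auto
  qed
  moreover have "f x = 0" if "x \<notin> topspace X" for x
  proof -
    have "\<forall>k. x \<notin> V k" using that Vo openin_subset by blast
    then show ?thesis by (rule f0)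
  qed
  ultimately show "f \<in> Cfun X" by (auto simp: Cfun_def)
qed



lemma sH_H: assumes "strictly_H_bounded_Ck X" shows "H_bounded_Ck X"
proof -
  obtain \<sigma> where H: "\<And>U. (\<forall>n. nhd0_k X (U n)) \<Longrightarrow>
             (\<forall>n. finite (\<sigma> (map U [0..<Suc n])) \<and> \<sigma> (map U [0..<Suc n]) \<subseteq> Cfun X) \<and>
             (\<forall>f\<in>Cfun X. \<forall>\<^sub>F n in sequentially. f \<in> gset_add (\<sigma> (map U [0..<Suc n])) (U n))"
    using assms unfolding strictly_H_bounded_Ck_def by blast
  show ?thesis unfolding H_bounded_Ck_def
  proof (intro allI impI)
    fix U :: "nat \<Rightarrow> ('a \<Rightarrow> real) set" assume U: "\<forall>n. nhd0_k X (U n)"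
    show "\<exists>A. (\<forall>n. finite (A n) \<and> A n \<subseteq> Cfun X) \<and> (\<forall>f\<in>Cfun X. \<forall>\<^sub>F n in sequentially. f \<in> gset_add (A n) (U n))"
      by (rule exI[of _ "\<lambda>n. \<sigma> (map U [0..<Suc n])"]) (rule H[OF U])
  qed
qed

lemma sM_M: assumes "strictly_M_bounded_Ck X" shows "M_bounded_Ck X"
proof -
  obtain \<sigma> where H: "\<And>U. (\<forall>n. nhd0_k X (U n)) \<Longrightarrow>
             (\<forall>n. finite (\<sigma> (map U [0..<Suc n])) \<and> \<sigma> (map U [0..<Suc n]) \<subseteq> Cfun X) \<and>
             Cfun X = (\<Union>n. gset_add (\<sigma> (map U [0..<Suc n])) (U n))"
    using assms unfolding strictly_M_bounded_Ck_def by blast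
  show ?thesis unfolding M_bounded_Ck_def
  proof (intro allI impI)
    fix U :: "nat \<Rightarrow> ('a \<Rightarrow> real) set" assume U: "\<forall>n. nhd0_k X (U n)"
    show "\<exists>A. (\<forall>n. finite (A n) \<and> A n \<subseteq> Cfun X) \<and> Cfun X = (\<Union>n. gset_add (A n) (U n))"
      by (rule exI[of _ "\<lambda>n. \<sigma> (map U [0..<Suc n])"]) (rule H[OF U])
  qed
qed

lemma ev_cover:
  assumes "\<forall>n. finite (A n) \<and> A n \<subseteq> Cfun X" "\<forall>n. nhd0_k X (U n)"
    "\<forall>f\<in>Cfun X. \<forall>\<^sub>F n in sequentially. f \<in> gset_add (A n) (U n)"
  shows "Cfun X = (\<Union>n. gset_add (A n) (U n))"
proof
  show "Cfun X \<subseteq> (\<Union>n. gset_add (A n) (U n))"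
  proof
    fix f assume "f \<in> Cfun X"
    then have "\<forall>\<^sub>F n in sequentially. f \<in> gset_add (A n) (U n)" using assms(3) by blast
    then obtain N where "\<forall>n\<ge>N. f \<in> gset_add (A n) (U n)" unfolding eventually_sequentially by blast
    then show "f \<in> (\<Union>n. gset_add (A n) (U n))" by blast
  qed
  have "gset_add (A n) (U n) \<subseteq> Cfun X" for n
    by (rule gset_add_sub) (use assms in \<open>auto simp: nhd0_k_def\<close>)
  then show "(\<Union>n. gset_add (A n) (U n)) \<subseteq> Cfun X" by blast
qed

lemma H_M: assumes "H_bounded_Ck X" shows "M_bounded_Ck X"
  unfolding M_bounded_Ck_def
proof (intro allI impI)
  fix U :: "nat \<Rightarrow> ('a \<Rightarrow> real) set" assume U: "\<forall>n. nhd0_k X (U n)"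
  obtain A where A: "\<forall>n. finite (A n) \<and> A n \<subseteq> Cfun X" "\<forall>f\<in>Cfun X. \<forall>\<^sub>F n in sequentially. f \<in> gset_add (A n) (U n)"
    using assms[unfolded H_bounded_Ck_def, THEN spec[of _ U], THEN mp, OF U] by blast
  show "\<exists>A. (\<forall>n. finite (A n) \<and> A n \<subseteq> Cfun X) \<and> Cfun X = (\<Union>n. gset_add (A n) (U n))"
    using ev_cover[OF A(1) U A(2)] A(1) by blast
qed

lemma sH_sM: assumes "strictly_H_bounded_Ck X" shows "strictly_M_bounded_Ck X"
proof -
  obtain \<sigma> where H: "\<And>U. (\<forall>n. nhd0_k X (U n)) \<Longrightarrow>
             (\<forall>n. finite (\<sigma> (map U [0..<Suc n])) \<and> \<sigma> (map U [0..<Suc n]) \<subseteq> Cfun X) \<and>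
             (\<forall>f\<in>Cfun X. \<forall>\<^sub>F n in sequentially. f \<in> gset_add (\<sigma> (map U [0..<Suc n])) (U n))"
    using assms unfolding strictly_H_bounded_Ck_def by blast
  have "\<forall>U. (\<forall>n. nhd0_k X (U n)) \<longrightarrow>
        (\<forall>n. finite (\<sigma> (map U [0..<Suc n])) \<and> \<sigma> (map U [0..<Suc n]) \<subseteq> Cfun X) \<and>
        Cfun X = (\<Union>n. gset_add (\<sigma> (map U [0..<Suc n])) (U n))"
  proof (intro allI impI, rule conjI)
    fix U :: "nat \<Rightarrow> ('a \<Rightarrow> real) set" assume U: "\<forall>n. nhd0_k X (U n)"
    show "\<forall>n. finite (\<sigma> (map U [0..<Suc n])) \<and> \<sigma> (map U [0..<Suc n]) \<subseteq> Cfun X"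
      using H[OF U] by (rule conjunct1)
    show "Cfun X = (\<Union>n. gset_add (\<sigma> (map U [0..<Suc n])) (U n))"
      using H[OF U] U by (intro ev_cover[of "\<lambda>n. \<sigma> (map U [0..<Suc n])"]) auto
  qed
  then show ?thesis unfolding strictly_M_bounded_Ck_def by (rule exI[of _ \<sigma>])
qed



lemma M_pseudo:
  assumes T: "tychonoff_space X" and M: "M_bounded_Ck X"
  shows "pseudocompact X"
proof (rule ccontr)
  assume "\<not> pseudocompact X"
  then obtain h where hc: "continuous_map X euclideanreal h" and unb: "\<And>B. \<exists>x\<in>topspace X. \<bar>h x\<bar> > B"
    unfolding pseudocompact_def by (auto simp: not_le)
  define h' where "h' = (\<lambda>x. \<bar>h x\<bar>)"
  have h'c: "continuous_map X euclideanreal h'" unfolding h'_def using hc by (rule continuous_map_real_abs)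
  have unb': "\<exists>y. y \<in> topspace X \<and> B \<le> h' y" for B using unb[of B] by (force simp: h'_def)
  define nxt where "nxt x = (SOME y. y \<in> topspace X \<and> h' x + 2 \<le> h' y)" for x
  have nxt: "nxt x \<in> topspace X \<and> h' x + 2 \<le> h' (nxt x)" for x
    unfolding nxt_def by (rule someI_ex) (rule unb')
  obtain x0 where x0: "x0 \<in> topspace X" using unb'[of 0] by blast
  define pt where "pt k = (nxt ^^ k) x0" for k
  have ptS: "pt (Suc k) = nxt (pt k)" for k by (simp add: pt_def)
  have pt_in: "pt k \<in> topspace X" for k
  proof (cases k)
    case 0 then show ?thesis by (simp add: pt_def x0)
  next
    case (Suc m) then show ?thesis by (simp add: ptS nxt)
  qed
  define t where "t k = h' (pt k)" for k
  have tS: "t k + 2 \<le> t (Suc k)" for k using nxt[of "pt k"] by (simp add: t_def ptS)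
  have tlow: "2 * real k \<le> t k" for k
  proof (induction k)
    case 0 then show ?case by (simp add: t_def h'_def)
  next
    case (Suc k) then show ?case using tS[of k] by simp
  qed
  have tmono: "j < k \<Longrightarrow> t j + 2 \<le> t k" for j k
  proof (induction k)
    case (Suc k) then show ?case using tS[of k] by (auto simp: less_Suc_eq)
  qed simp
  define V where "V k = {y\<in>topspace X. h' y \<in> ball (t k) 1}" for k
  have Vo: "openin X (V k)" for k unfolding V_def
    using h'c by (intro openin_continuous_map_preimage) auto
  have Vd: "V j \<inter> V k = {}" if "j \<noteq> k" for j k
  proof -
    { fix y assume "y \<in> V j" "y \<in> V k"
      then have "\<bar>t j - t k\<bar> < 2" by (auto simp: V_def dist_real_def)
      moreover have "j < k \<or> k < j" using that by arith
      then have "t j + 2 \<le> t k \<or> t k + 2 \<le> t j" using tmono by blast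
      ultimately have False by linarith }
    then show ?thesis by blast
  qed
  define \<phi> where "\<phi> k y = (if y \<in> topspace X then max 0 (1 - \<bar>h' y - t k\<bar>) else 0)" for k y
  have \<phi>c: "continuous_map X euclideanreal (\<phi> k)" for k
  proof -
    have "continuous_map X euclideanreal (\<lambda>y. max 0 (1 - \<bar>h' y - t k\<bar>))"
      using h'c by (intro continuous_intros) auto
    then show ?thesis by (rule continuous_map_eq) (auto simp: \<phi>_def)
  qed
  have \<phi>0: "\<phi> k y = 0" if "y \<notin> V k" for k y
    using that by (auto simp: \<phi>_def V_def dist_real_def)
  have ptV: "pt k \<in> V k" for k using pt_in by (auto simp: V_def t_def)
  have \<phi>1: "\<phi> k (pt k) = 1" for k using pt_in by (simp add: \<phi>_def t_def)
  define U where "U n = {g\<in>Cfun X. \<forall>z\<in>{pt n}. \<bar>g z\<bar> < 1}" for n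
  have Un: "nhd0_k X (U n)" for n
  proof -
    have c: "compactin X {pt n}" using pt_in by simp
    have "U n \<subseteq> Cfun X" "{g\<in>Cfun X. \<forall>x\<in>{pt n}. \<bar>g x\<bar> < 1} \<subseteq> U n" by (auto simp: U_def)
    then show ?thesis unfolding nhd0_k_def
      by (intro conjI exI[of _ "{pt n}"] exI[of _ "1::real"]) (use c in simp_all)
  qed
  obtain A where A: "\<forall>n. finite (A n) \<and> A n \<subseteq> Cfun X" and cov: "Cfun X = (\<Union>n. gset_add (A n) (U n))"
    using M[unfolded M_bounded_Ck_def, THEN spec[of _ U], THEN mp, OF allI[OF Un]] by blast
  define s where "s n = 1 + (\<Sum>a\<in>A n. \<bar>a (pt n)\<bar>)" for n
  define f where "f \<equiv> \<lambda>x. s (SOME k. x \<in> V k) * \<phi> (SOME k. x \<in> V k) x"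
  have loc: "\<exists>Wa F. openin X Wa \<and> x \<in> Wa \<and> finite F \<and> (\<forall>k. k \<notin> F \<longrightarrow> (\<forall>y\<in>Wa. \<bar>s k * \<phi> k y\<bar> < \<delta>))"
    if x: "x \<in> topspace X" and d: "\<delta> > 0" for x \<delta>
  proof (intro exI conjI)
    let ?W = "{y\<in>topspace X. h' y \<in> ball (h' x) 1}"
    show "openin X ?W" using h'c by (intro openin_continuous_map_preimage) auto
    show "x \<in> ?W" using x by auto
    show "finite {..nat \<lceil>h' x + 2\<rceil>}" by simp
    show "\<forall>k. k \<notin> {..nat \<lceil>h' x + 2\<rceil>} \<longrightarrow> (\<forall>y\<in>?W. \<bar>s k * \<phi> k y\<bar> < \<delta>)"
    proof (intro allI impI ballI)
      fix k y assume k: "k \<notin> {..nat \<lceil>h' x + 2\<rceil>}" and y: "y \<in> ?W"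
      have k1: "nat \<lceil>h' x + 2\<rceil> < k" using k by auto
      have "h' x + 2 \<le> real (nat \<lceil>h' x + 2\<rceil>)" by (rule real_nat_ceiling_ge)
      moreover have "real (nat \<lceil>h' x + 2\<rceil>) < real k" using k1 by simp
      ultimately have "real k > h' x + 2" by linarith
      then have "t k > h' x + 2" using tlow[of k] by linarith
      moreover have "h' y < h' x + 1" using y by (auto simp: dist_real_def)
      ultimately have "\<phi> k y = 0" using y by (auto simp: \<phi>_def)
      then show "\<bar>s k * \<phi> k y\<bar> < \<delta>" using d by simp
    qed
  qed
  have fC: "f \<in> Cfun X" unfolding f_def by (rule glue(1)[of X V \<phi> s, OF Vo Vd \<phi>c \<phi>0 loc])
  have fV: "f x = s k * \<phi> k x" if "x \<in> V k" for k x
    unfolding f_def by (rule glue(2)[of X V \<phi> s, OF Vo Vd \<phi>c \<phi>0 loc that])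
  have "f \<in> (\<Union>n. gset_add (A n) (U n))" using fC unfolding cov .
  then obtain n where "f \<in> gset_add (A n) (U n)" by blast
  then obtain a u where a: "a \<in> A n" and u: "u \<in> U n" and fe: "f = (\<lambda>x. a x + u x)"
    unfolding gset_add_def by blast
  have "f (pt n) = s n" using fV[OF ptV[of n]] \<phi>1 by simp
  moreover have "f (pt n) = a (pt n) + u (pt n)" using fe by simp
  ultimately have "u (pt n) = s n - a (pt n)" by linarith
  moreover have "\<bar>u (pt n)\<bar> < 1" using u by (simp add: U_def)
  moreover have "\<bar>a (pt n)\<bar> \<le> (\<Sum>a\<in>A n. \<bar>a (pt n)\<bar>)"
    using A a by (intro member_le_sum) auto
  ultimately have "u (pt n) < 1" "a (pt n) \<le> (\<Sum>a\<in>A n. \<bar>a (pt n)\<bar>)" "u (pt n) = s n - a (pt n)"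
    by auto
  moreover have "s n = 1 + (\<Sum>a\<in>A n. \<bar>a (pt n)\<bar>)" by (simp only: s_def)
  ultimately show False by linarith
qed



lemma acc_point:
  assumes K: "compactin X K" and inf: "infinite K"
  shows "\<exists>p\<in>K. \<forall>W. openin X W \<and> p \<in> W \<longrightarrow> infinite (W \<inter> K)"
proof (rule ccontr)
  assume "\<not> ?thesis"
  then have "\<forall>p\<in>K. \<exists>W. openin X W \<and> p \<in> W \<and> finite (W \<inter> K)" by blast
  then obtain Wf where Wf: "\<And>p. p \<in> K \<Longrightarrow> openin X (Wf p) \<and> p \<in> Wf p \<and> finite (Wf p \<inter> K)" by metis
  have "(\<forall>U \<in> Wf ` K. openin X U) \<and> K \<subseteq> \<Union>(Wf ` K)" using Wf by blast
  then obtain F where F: "finite F" "F \<subseteq> Wf ` K" "K \<subseteq> \<Union>F"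
    using K unfolding compactin_def by meson
  have "K \<subseteq> (\<Union>W\<in>F. W \<inter> K)" using F(3) by blast
  moreover have "finite (\<Union>W\<in>F. W \<inter> K)" using F(1,2) Wf by (intro finite_UN_I) auto
  ultimately show False using inf finite_subset by blast
qed

lemma M_cfin:
  assumes T: "tychonoff_space X" and M: "M_bounded_Ck X" and K: "compactin X K"
  shows "finite K"
proof (rule ccontr)
  assume inf: "infinite K"
  have H: "Hausdorff_space X" using T by (simp add: tychonoff_space_def)
  have Ksub: "K \<subseteq> topspace X" using K by (rule compactin_subset_topspace)
  obtain p where pK: "p \<in> K" and pinf: "\<And>W. openin X W \<Longrightarrow> p \<in> W \<Longrightarrow> infinite (W \<inter> K)"
    using acc_point[OF K inf] by blast
  define P where "P W x V W' \<longleftrightarrow> x \<in> W \<inter> K \<and> openin X V \<and> x \<in> V \<and> V \<subseteq> W \<and> openin X W' \<and> p \<in> W' \<and> W' \<subseteq> W \<and> V \<inter> W' = {}" for W x V W'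
  have Pex: "\<exists>x V W'. P W x V W'" if W: "openin X W" "p \<in> W" for W
  proof -
    have "infinite (W \<inter> K - {p})" using pinf[OF W] by simp
    then have "W \<inter> K - {p} \<noteq> {}" by (metis finite.emptyI)
    then obtain x where x0: "x \<in> W \<inter> K - {p}" by (meson ex_in_conv)
    then have x: "x \<in> W \<inter> K" "x \<noteq> p" by simp_all
    have xt: "x \<in> topspace X" "p \<in> topspace X" using x Ksub pK by auto
    have "\<exists>U V. openin X U \<and> openin X V \<and> x \<in> U \<and> p \<in> V \<and> disjnt U V"
      using H[unfolded Hausdorff_space_def, rule_format, of x p] xt x(2) by simp
    then obtain V1 W1 where "openin X V1" "openin X W1" "x \<in> V1" "p \<in> W1" "disjnt V1 W1"
      by (elim exE conjE)
    then have "P W x (V1 \<inter> W) (W1 \<inter> W)" using W x by (auto simp: P_def disjnt_def)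
    then show ?thesis by blast
  qed
  define pt where "pt W = (SOME x. \<exists>V W'. P W x V W')" for W
  define vv where "vv W = (SOME V. \<exists>W'. P W (pt W) V W')" for W
  define ww where "ww W = (SOME W'. P W (pt W) (vv W) W')" for W
  have Pw: "P W (pt W) (vv W) (ww W)" if "openin X W" "p \<in> W" for W
  proof -
    have "\<exists>V W'. P W (pt W) V W'" unfolding pt_def by (rule someI_ex) (rule Pex[OF that])
    then have "\<exists>W'. P W (pt W) (vv W) W'" unfolding vv_def by (rule someI_ex)
    then show ?thesis unfolding ww_def by (rule someI_ex)
  qed
  define Ws where "Ws n = (ww ^^ n) (topspace X)" for n
  have WsS: "Ws (Suc n) = ww (Ws n)" for n by (simp add: Ws_def)
  have Wsp: "openin X (Ws n) \<and> p \<in> Ws n" for n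
  proof (induction n)
    case 0 then show ?case using pK Ksub by (auto simp: Ws_def)
  next
    case (Suc n) then show ?case using Pw[of "Ws n"] by (simp add: WsS P_def)
  qed
  have PW: "P (Ws n) (pt (Ws n)) (vv (Ws n)) (ww (Ws n))" for n using Pw Wsp by blast
  have Wsdec: "Ws m \<subseteq> Ws n" if "n \<le> m" for m n
    using that
  proof (induction m)
    case (Suc m)
    then show ?case using PW[of m] by (auto simp: WsS P_def le_Suc_eq)
  qed simp
  define V where "V k = vv (Ws k)" for k
  define x where "x k = pt (Ws k)" for k
  have Vo: "openin X (V k)" for k using PW[of k] by (simp add: V_def P_def)
  have xV: "x k \<in> V k" "x k \<in> K" for k using PW[of k] by (auto simp: V_def x_def P_def)
  have Vdlt: "V j \<inter> V k = {}" if "j < k" for j k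
  proof -
    have "V k \<subseteq> Ws k" using PW[of k] by (simp add: V_def P_def)
    also have "Ws k \<subseteq> Ws (Suc j)" using that Wsdec by simp
    also have "Ws (Suc j) = ww (Ws j)" by (rule WsS)
    finally show ?thesis using PW[of j] by (auto simp: V_def P_def)
  qed
  have Vd: "V j \<inter> V k = {}" if "j \<noteq> k" for j k
  proof -
    have "j < k \<or> k < j" using that by arith
    then show ?thesis using Vdlt[of j k] Vdlt[of k j] by blast
  qed
  have "\<forall>k. \<exists>\<phi>. continuous_map X euclideanreal \<phi> \<and> \<phi> (x k) = 1 \<and> (\<forall>y. y \<notin> V k \<longrightarrow> \<phi> y = 0) \<and> (\<forall>y. \<bar>\<phi> y\<bar> \<le> 1)"
    using bump[OF T Vo xV(1)] by blast
  then obtain \<phi> where \<phi>c: "\<And>k. continuous_map X euclideanreal (\<phi> k)" and \<phi>1: "\<And>k. \<phi> k (x k) = 1"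
    and \<phi>0: "\<And>k y. y \<notin> V k \<Longrightarrow> \<phi> k y = 0" and \<phi>b: "\<And>k y. \<bar>\<phi> k y\<bar> \<le> 1"
    by metis
  define \<epsilon> where "\<epsilon> n = 1 / real (Suc n)" for n
  have ep: "\<epsilon> n > 0" for n by (simp add: \<epsilon>_def)
  define U where "U n = {g\<in>Cfun X. \<forall>z\<in>K. \<bar>g z\<bar> < \<epsilon> n}" for n
  have Un: "nhd0_k X (U n)" for n
  proof -
    have "U n \<subseteq> Cfun X" "{g\<in>Cfun X. \<forall>x\<in>K. \<bar>g x\<bar> < \<epsilon> n} \<subseteq> U n" by (auto simp: U_def)
    then show ?thesis unfolding nhd0_k_def
      by (intro conjI exI[of _ K] exI[of _ "\<epsilon> n"]) (use K ep in simp_all)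
  qed
  obtain A where A: "\<forall>n. finite (A n) \<and> A n \<subseteq> Cfun X" and cov: "Cfun X = (\<Union>n. gset_add (A n) (U n))"
    using M[unfolded M_bounded_Ck_def, THEN spec[of _ U], THEN mp, OF allI[OF Un]] by blast
  define L where "L n = (SOME l. set l = A n)" for n
  have L: "set (L n) = A n" for n unfolding L_def using A finite_list by (metis (mono_tags) someI_ex)
  define s where "s k = (case prod_decode k of (n, i) \<Rightarrow>
      if i < length (L n) then (if \<epsilon> n \<le> \<bar>(L n ! i) (x k)\<bar> then 0 else 2 * \<epsilon> n) else 0)" for k
  have sfin: "finite {k. \<delta> \<le> \<bar>s k\<bar>}" if d: "\<delta> > 0" for \<delta>
  proof -
    define N where "N = nat \<lceil>2 / \<delta>\<rceil>"
    have "{k. \<delta> \<le> \<bar>s k\<bar>} \<subseteq> prod_encode ` (SIGMA n:{..N}. {..<length (L n)})"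
    proof
      fix k assume k: "k \<in> {k. \<delta> \<le> \<bar>s k\<bar>}"
      obtain n i where ni: "prod_decode k = (n, i)" by (cases "prod_decode k")
      have kk: "k = prod_encode (n, i)" using ni by (metis prod_decode_inverse)
      have i: "i < length (L n)" and sv: "\<delta> \<le> 2 * \<epsilon> n"
        using k d by (auto simp: s_def ni split: if_splits)
      have "\<delta> * real (Suc n) \<le> 2" using sv d by (simp add: \<epsilon>_def field_simps)
      then have "real (Suc n) \<le> 2 / \<delta>" using d by (simp add: field_simps)
      then have "n \<le> N" unfolding N_def by linarith
      then show "k \<in> prod_encode ` (SIGMA n:{..N}. {..<length (L n)})" using kk i by blast
    qed
    then show ?thesis by (rule finite_subset) auto
  qed
  have loc: "\<exists>Wa F. openin X Wa \<and> y \<in> Wa \<and> finite F \<and> (\<forall>k. k \<notin> F \<longrightarrow> (\<forall>z\<in>Wa. \<bar>s k * \<phi> k z\<bar> < \<delta>))"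
    if y: "y \<in> topspace X" and d: "\<delta> > 0" for y \<delta>
  proof (intro exI conjI)
    show "openin X (topspace X)" by simp
    show "y \<in> topspace X" by (rule y)
    show "finite {k. \<delta> \<le> \<bar>s k\<bar>}" using sfin d .
    show "\<forall>k. k \<notin> {k. \<delta> \<le> \<bar>s k\<bar>} \<longrightarrow> (\<forall>z\<in>topspace X. \<bar>s k * \<phi> k z\<bar> < \<delta>)"
    proof (intro allI impI ballI)
      fix k z assume "k \<notin> {k. \<delta> \<le> \<bar>s k\<bar>}"
      then have "\<bar>s k\<bar> < \<delta>" by simp
      moreover have "\<bar>s k * \<phi> k z\<bar> \<le> \<bar>s k\<bar>"
        using \<phi>b[of k z] by (simp add: abs_mult mult_left_le)
      ultimately show "\<bar>s k * \<phi> k z\<bar> < \<delta>" by linarith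
    qed
  qed
  define f where "f \<equiv> \<lambda>x. s (SOME k. x \<in> V k) * \<phi> (SOME k. x \<in> V k) x"
  have fC: "f \<in> Cfun X" unfolding f_def by (rule glue(1)[of X V \<phi> s, OF Vo Vd \<phi>c \<phi>0 loc])
  have fV: "f y = s k * \<phi> k y" if "y \<in> V k" for k y
    unfolding f_def by (rule glue(2)[of X V \<phi> s, OF Vo Vd \<phi>c \<phi>0 loc that])
  have "f \<in> (\<Union>n. gset_add (A n) (U n))" using fC unfolding cov .
  then obtain n where "f \<in> gset_add (A n) (U n)" by blast
  then obtain a u where a: "a \<in> A n" and u: "u \<in> U n" and fe: "f = (\<lambda>x. a x + u x)"
    unfolding gset_add_def by blast
  obtain i where i: "i < length (L n)" "L n ! i = a" using a L by (metis in_set_conv_nth)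
  define k where "k = prod_encode (n, i)"
  have sk: "s k = (if \<epsilon> n \<le> \<bar>a (x k)\<bar> then 0 else 2 * \<epsilon> n)"
    using i by (simp add: s_def k_def)
  have "f (x k) = s k" using fV[OF xV(1)[of k]] \<phi>1 by simp
  moreover have "f (x k) = a (x k) + u (x k)" using fe by simp
  ultimately have ue: "u (x k) = s k - a (x k)" by linarith
  have "\<bar>u (x k)\<bar> < \<epsilon> n" using u xV(2)[of k] by (simp add: U_def)
  then show False using ue sk ep[of n] by (auto split: if_splits)
qed


theorem theorem2p6:
  fixes X :: "'a topology"
  assumes "tychonoff_space X"
  shows "(strictly_H_bounded_Ck X \<longleftrightarrow> H_bounded_Ck X) \<and>
         (H_bounded_Ck X \<longleftrightarrow> strictly_M_bounded_Ck X) \<and>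
         (strictly_M_bounded_Ck X \<longleftrightarrow> M_bounded_Ck X) \<and>
         (M_bounded_Ck X \<longleftrightarrow>
            (pseudocompact X \<and> (\<forall>K. compactin X K \<longrightarrow> finite K)))"
proof -
  have ME: "pseudocompact X \<and> (\<forall>K. compactin X K \<longrightarrow> finite K)" if "M_bounded_Ck X"
    using M_pseudo[OF assms that] M_cfin[OF assms that] by blast
  have ES: "strictly_H_bounded_Ck X" if "pseudocompact X \<and> (\<forall>K. compactin X K \<longrightarrow> finite K)"
    using five_sH[OF assms] that by blast
  show ?thesis using ME ES sH_H[of X] H_M[of X] sH_sM[of X] sM_M[of X] by blast
qed

end
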